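(* Let $G$ be a group, $H$ a finite index normal subgroup of $G$, $K$ a normal subgroup of $G$, and $g\in H$. If $\nu(g;G,K)$ is infinite, then $\nu(g;H,H\cap K)$ is infinite.
   Context: For a group $G$, a normal subgroup $K$ and $g\in G$, with $\psi:G\to G/K$ the quotient map: if $g\in K$, $\nu(g;G,K)$ is the supremum of $o(\psi(a),G/K)$ (order of $\psi(a)$) over all $a\in G$ such that $a^n=g$ for some integer $n$; if $g\notin K$, $\nu(g;G,K)$ is the supremum of all non-zero integers $n$ for which $g=a^n$ for some $a\in G$. $\nu(g;G,K)$ is infinite if the relevant set is unbounded. The same definition applies to $\nu(g;H,H\cap K)$ within the group $H$ and its normal subgroup $H\cap K$. *)

theory Defs
  imports "HOL-Algebra.Algebra" "HOL-Library.Extended_Real"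
begin

text \<open>Order of an element of a group, as an extended real: infinite order is \<infinity>.
  (group.ord returns 0 for elements of infinite order.)\<close>
definition elem_order :: "('a, 'b) monoid_scheme \<Rightarrow> 'a \<Rightarrow> ereal" where
  "elem_order G x = (if group.ord G x = 0 then \<infinity> else ereal (real (group.ord G x)))"

definition nu :: "('a, 'b) monoid_scheme \<Rightarrow> 'a set \<Rightarrow> 'a \<Rightarrow> ereal" where
  "nu G K g =
     (if g \<in> K then
        Sup {elem_order (G Mod K) (K #>\<^bsub>G\<^esub> a) | a. a \<in> carrier G \<and> (\<exists>n::int. a [^]\<^bsub>G\<^esub> n = g)}
      else
        Sup {ereal (real_of_int n) | n::int. n \<noteq> 0 \<and> (\<exists>a \<in> carrier G. g = a [^]\<^bsub>G\<^esub> n)})"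

end

theory Submission
  imports Defs
begin

lemma coset_eq_self_iff:
  assumes "group G" "N \<lhd> G" "x \<in> carrier G"
  shows "(N #>\<^bsub>G\<^esub> x = N) \<longleftrightarrow> x \<in> N"
proof
  assume "N #>\<^bsub>G\<^esub> x = N"
  then show "x \<in> N" using group.coset_join1[OF assms(1) _ assms(3) normal_imp_subgroup[OF assms(2)]] by simp
next
  assume "x \<in> N"
  then show "N #>\<^bsub>G\<^esub> x = N" by (rule subgroup.rcos_const[OF normal_imp_subgroup[OF assms(2)] assms(1)])
qed

lemma quot_ord_dvd_nat:
  assumes "group G" "N \<lhd> G" "a \<in> carrier G"
  shows "group.ord (G Mod N) (N #>\<^bsub>G\<^esub> a) dvd n \<longleftrightarrow> a [^]\<^bsub>G\<^esub> (n::nat) \<in> N"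
proof -
  interpret G: group G by fact
  interpret Q: group "G Mod N" using normal.factorgroup_is_group assms(2) by blast
  have h: "(\<lambda>a. N #>\<^bsub>G\<^esub> a) \<in> hom G (G Mod N)" using normal.r_coset_hom_Mod assms(2) by blast
  have c: "N #>\<^bsub>G\<^esub> a \<in> carrier (G Mod N)" using hom_in_carrier[OF h assms(3)] by simp
  have p: "(N #>\<^bsub>G\<^esub> a) [^]\<^bsub>G Mod N\<^esub> n = N #>\<^bsub>G\<^esub> (a [^]\<^bsub>G\<^esub> n)"
    using hom_nat_pow[OF h assms(3) assms(1) Q.is_group] by simp
  show ?thesis
    using Q.pow_eq_id[OF c, of n] p coset_eq_self_iff[OF assms(1,2), of "a [^]\<^bsub>G\<^esub> n"] assms(3)
    by simp
qed

lemma quot_ord_dvd_int: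
  assumes "group G" "N \<lhd> G" "a \<in> carrier G"
  shows "int (group.ord (G Mod N) (N #>\<^bsub>G\<^esub> a)) dvd n \<longleftrightarrow> a [^]\<^bsub>G\<^esub> (n::int) \<in> N"
proof -
  interpret G: group G by fact
  interpret Q: group "G Mod N" using normal.factorgroup_is_group assms(2) by blast
  have h: "(\<lambda>a. N #>\<^bsub>G\<^esub> a) \<in> hom G (G Mod N)" using normal.r_coset_hom_Mod assms(2) by blast
  have c: "N #>\<^bsub>G\<^esub> a \<in> carrier (G Mod N)" using hom_in_carrier[OF h assms(3)] by simp
  have p: "(N #>\<^bsub>G\<^esub> a) [^]\<^bsub>G Mod N\<^esub> n = N #>\<^bsub>G\<^esub> (a [^]\<^bsub>G\<^esub> n)"
    using hom_int_pow[OF h assms(3) assms(1) Q.is_group] by simp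
  show ?thesis
    using Q.int_pow_eq_id[OF c, of n] p coset_eq_self_iff[OF assms(1,2), of "a [^]\<^bsub>G\<^esub> n"] assms(3)
    by simp
qed

lemma Sup_ereal_inf_iff:
  "(Sup (S::ereal set) = \<infinity>) \<longleftrightarrow> (\<forall>r::real. \<exists>s\<in>S. ereal r < s)"
proof
  assume "Sup S = \<infinity>"
  then show "\<forall>r::real. \<exists>s\<in>S. ereal r < s"
  proof (intro allI)
    fix r :: real
    have "ereal r < Orderings.top" by (simp add: top_ereal_def)
    then show "\<exists>s\<in>S. ereal r < s" using \<open>Sup S = \<infinity>\<close> Sup_eq_top_iff[of S]
      unfolding top_ereal_def by blast
  qed
next
  assume a: "\<forall>r::real. \<exists>s\<in>S. ereal r < s"
  show "Sup S = \<infinity>" unfolding top_ereal_def[symmetric] Sup_eq_top_iff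
  proof (intro allI impI)
    fix x :: ereal assume "x < Orderings.top"
    then show "\<exists>i\<in>S. x < i"
    proof (cases x)
      case (real r) then show ?thesis using a by simp
    next
      case PInf then show ?thesis using \<open>x < Orderings.top\<close> by simp
    next
      case MInf
      obtain s where "s \<in> S" "ereal 0 < s" using a by blast
      have "x < ereal 0" using MInf by simp
      then have "x < s" using \<open>ereal 0 < s\<close> by (rule less_trans)
      with \<open>s \<in> S\<close> show ?thesis by blast
    qed
  qed
qed

lemma root_transfer:
  assumes "group G" "H \<lhd> G" "finite (rcosets\<^bsub>G\<^esub> H)" "g \<in> H"
    and "a \<in> carrier G" "a [^]\<^bsub>G\<^esub> (m::int) = g"
  shows "\<exists>d::nat. 0 < d \<and> d \<le> card (rcosets\<^bsub>G\<^esub> H) \<and> int d dvd m \<and>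
           a [^]\<^bsub>G\<^esub> d \<in> H \<and> (a [^]\<^bsub>G\<^esub> d) [^]\<^bsub>G\<^esub> (m div int d) = g"
proof -
  interpret G: group G by fact
  interpret Q: group "G Mod H" using normal.factorgroup_is_group assms(2) by blast
  define d where "d = group.ord (G Mod H) (H #>\<^bsub>G\<^esub> a)"
  have h: "(\<lambda>a. H #>\<^bsub>G\<^esub> a) \<in> hom G (G Mod H)" using normal.r_coset_hom_Mod assms(2) by blast
  have c: "H #>\<^bsub>G\<^esub> a \<in> carrier (G Mod H)" using hom_in_carrier[OF h assms(5)] by simp
  have fin: "finite (carrier (G Mod H))" using assms(3) by (simp add: FactGroup_def)
  have ocard: "order (G Mod H) = card (rcosets\<^bsub>G\<^esub> H)" by (simp add: order_def FactGroup_def)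
  have "d \<le> order (G Mod H)" unfolding d_def using Q.ord_le_group_order[OF fin c] .
  moreover have "d \<noteq> 0"
  proof
    assume "d = 0"
    moreover have "d dvd order (G Mod H)" unfolding d_def by (rule Q.ord_dvd_group_order[OF c])
    ultimately have "order (G Mod H) = 0" by simp
    moreover have "0 < order (G Mod H)" using Q.order_gt_0_iff_finite fin by simp
    ultimately show False by simp
  qed
  moreover have "int d dvd m" unfolding d_def
    using quot_ord_dvd_int[OF assms(1,2,5), of m] assms(4,6) by simp
  moreover have "a [^]\<^bsub>G\<^esub> d \<in> H"
    using quot_ord_dvd_nat[OF assms(1,2,5), of d] by (simp add: d_def)
  moreover have "(a [^]\<^bsub>G\<^esub> d) [^]\<^bsub>G\<^esub> (m div int d) = g"
  proof -
    have "(a [^]\<^bsub>G\<^esub> d) [^]\<^bsub>G\<^esub> (m div int d) = (a [^]\<^bsub>G\<^esub> (int d)) [^]\<^bsub>G\<^esub> (m div int d)"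
      by (simp add: int_pow_int)
    also have "\<dots> = a [^]\<^bsub>G\<^esub> (int d * (m div int d))" by (rule G.int_pow_pow[OF assms(5)])
    also have "\<dots> = a [^]\<^bsub>G\<^esub> m" using \<open>int d dvd m\<close> by simp
    finally show ?thesis using assms(6) by simp
  qed
  ultimately show ?thesis using ocard by (intro exI[of _ d]) simp
qed

theorem mainTheorem12:
  fixes G :: "('a, 'b) monoid_scheme" and H K :: "'a set" and g :: 'a
  assumes "group G"
    and "H \<lhd> G"
    and "finite (rcosets\<^bsub>G\<^esub> H)"
    and "K \<lhd> G"
    and "g \<in> H"
    and "nu G K g = \<infinity>"
  shows "nu (G\<lparr>carrier := H\<rparr>) (H \<inter> K) g = \<infinity>"
proof -
  interpret G: group G by fact
  define Hs where "Hs = G\<lparr>carrier := H\<rparr>"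
  define L where "L = H \<inter> K"
  define n where "n = card (rcosets\<^bsub>G\<^esub> H)"
  have sH: "subgroup H G" using assms(2) normal_imp_subgroup by blast
  have gHs: "group Hs" unfolding Hs_def using subgroup.subgroup_is_group[OF sH assms(1)] .
  interpret Hs: group Hs by (rule gHs)
  have nL: "L \<lhd> Hs" unfolding L_def Hs_def using G.normal_Int_subgroup[OF sH assms(4)]
    by (simp add: Int_commute)
  have cHs: "carrier Hs = H" unfolding Hs_def by simp
  have powHs: "x [^]\<^bsub>Hs\<^esub> (k::int) = x [^]\<^bsub>G\<^esub> k" if "x \<in> H" for x k
    unfolding Hs_def using G.int_pow_consistent[OF sH that] by simp
  have powHsn: "x [^]\<^bsub>Hs\<^esub> (k::nat) = x [^]\<^bsub>G\<^esub> k" for x k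
    unfolding Hs_def using G.nat_pow_consistent by simp
  have gG: "g \<in> carrier G" using assms(5) sH subgroup.subset by blast
  show ?thesis
  proof (cases "g \<in> K")
    case True
    have gL: "g \<in> L" unfolding L_def using True assms(5) by simp
    have S: "Sup {elem_order (G Mod K) (K #>\<^bsub>G\<^esub> a) | a. a \<in> carrier G \<and> (\<exists>n::int. a [^]\<^bsub>G\<^esub> n = g)} = \<infinity>"
      using assms(6) True unfolding nu_def by simp
    have "Sup {elem_order (Hs Mod L) (L #>\<^bsub>Hs\<^esub> a) | a. a \<in> carrier Hs \<and> (\<exists>n::int. a [^]\<^bsub>Hs\<^esub> n = g)} = \<infinity>"
      unfolding Sup_ereal_inf_iff
    proof
      fix r :: real
      obtain s where "s \<in> {elem_order (G Mod K) (K #>\<^bsub>G\<^esub> a) | a. a \<in> carrier G \<and> (\<exists>n::int. a [^]\<^bsub>G\<^esub> n = g)}"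
        and sr: "ereal (real n * \<bar>r\<bar>) < s"
        using S unfolding Sup_ereal_inf_iff by blast
      then obtain a m where a: "a \<in> carrier G" "a [^]\<^bsub>G\<^esub> (m::int) = g" and s: "s = elem_order (G Mod K) (K #>\<^bsub>G\<^esub> a)"
        by blast
      obtain d where d: "0 < d" "d \<le> n" "int d dvd m" "a [^]\<^bsub>G\<^esub> d \<in> H"
        "(a [^]\<^bsub>G\<^esub> d) [^]\<^bsub>G\<^esub> (m div int d) = g"
        using root_transfer[OF assms(1,2,3,5) a] unfolding n_def by blast
      define b where "b = a [^]\<^bsub>G\<^esub> d"
      have bH: "b \<in> H" using d b_def by simp
      have broot: "b [^]\<^bsub>Hs\<^esub> (m div int d) = g" using powHs[OF bH] d(5) b_def by simp
      define o1 where "o1 = group.ord (G Mod K) (K #>\<^bsub>G\<^esub> a)"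
      define o2 where "o2 = group.ord (Hs Mod L) (L #>\<^bsub>Hs\<^esub> b)"
      have o2dvd: "b [^]\<^bsub>G\<^esub> o2 \<in> K"
        using quot_ord_dvd_nat[OF gHs nL, of b o2] bH cHs powHsn unfolding o2_def L_def by simp
      have "b [^]\<^bsub>G\<^esub> o2 = a [^]\<^bsub>G\<^esub> (d * o2)" unfolding b_def using G.nat_pow_pow a(1) by simp
      hence dv: "o1 dvd d * o2" unfolding o1_def using quot_ord_dvd_nat[OF assms(1,4) a(1)] o2dvd by simp
      have inS: "elem_order (Hs Mod L) (L #>\<^bsub>Hs\<^esub> b) \<in> {elem_order (Hs Mod L) (L #>\<^bsub>Hs\<^esub> a) | a. a \<in> carrier Hs \<and> (\<exists>n::int. a [^]\<^bsub>Hs\<^esub> n = g)}"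
        using bH cHs broot by blast
      show "\<exists>s\<in>{elem_order (Hs Mod L) (L #>\<^bsub>Hs\<^esub> a) | a. a \<in> carrier Hs \<and> (\<exists>n::int. a [^]\<^bsub>Hs\<^esub> n = g)}. ereal r < s"
      proof (cases "o2 = 0")
        case True
        then have "elem_order (Hs Mod L) (L #>\<^bsub>Hs\<^esub> b) = \<infinity>" unfolding elem_order_def o2_def by simp
        then have "ereal r < elem_order (Hs Mod L) (L #>\<^bsub>Hs\<^esub> b)" by simp
        with inS show ?thesis by blast
      next
        case False
        then have "o1 \<noteq> 0" using dv d(1) by (metis dvd_0_left_iff mult_eq_0_iff neq0_conv)
        then have "real n * \<bar>r\<bar> < real o1" using sr s unfolding elem_order_def o1_def by simp
        moreover have "o1 \<le> d * o2" using dv False d(1) by (simp add: dvd_imp_le)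
        moreover have "d * o2 \<le> n * o2" using d(2) by (simp add: mult_right_mono)
        ultimately have "real o1 \<le> real (n * o2)" by linarith
        hence "real o1 \<le> real n * real o2" by simp
        with \<open>real n * \<bar>r\<bar> < real o1\<close> have "real n * \<bar>r\<bar> < real n * real o2" by linarith
        moreover have "real n > 0" using d(1,2) by simp
        ultimately have "\<bar>r\<bar> < real o2" by (simp add: mult_less_cancel_left)
        moreover have "elem_order (Hs Mod L) (L #>\<^bsub>Hs\<^esub> b) = ereal (real o2)"
          using False unfolding elem_order_def o2_def by simp
        ultimately have "ereal r < elem_order (Hs Mod L) (L #>\<^bsub>Hs\<^esub> b)" by simp
        with inS show ?thesis by blast
      qed
    qed
    then show ?thesis using gL unfolding nu_def Hs_def L_def by simp
  next
    case False
    have gL: "g \<notin> L" unfolding L_def using False by simp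
    have S: "Sup {ereal (real_of_int n) | n::int. n \<noteq> 0 \<and> (\<exists>a \<in> carrier G. g = a [^]\<^bsub>G\<^esub> n)} = \<infinity>"
      using assms(6) False unfolding nu_def by simp
    have "Sup {ereal (real_of_int n) | n::int. n \<noteq> 0 \<and> (\<exists>a \<in> carrier Hs. g = a [^]\<^bsub>Hs\<^esub> n)} = \<infinity>"
      unfolding Sup_ereal_inf_iff
    proof
      fix r :: real
      obtain s where "s \<in> {ereal (real_of_int n) | n::int. n \<noteq> 0 \<and> (\<exists>a \<in> carrier G. g = a [^]\<^bsub>G\<^esub> n)}"
        and sr: "ereal (real n * \<bar>r\<bar>) < s"
        using S unfolding Sup_ereal_inf_iff by blast
      then obtain a m where a: "a \<in> carrier G" "a [^]\<^bsub>G\<^esub> (m::int) = g" and s: "s = ereal (real_of_int m)"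
        by auto
      obtain d where d: "0 < d" "d \<le> n" "int d dvd m" "a [^]\<^bsub>G\<^esub> d \<in> H"
        "(a [^]\<^bsub>G\<^esub> d) [^]\<^bsub>G\<^esub> (m div int d) = g"
        using root_transfer[OF assms(1,2,3,5) a] unfolding n_def by blast
      define b where "b = a [^]\<^bsub>G\<^esub> d"
      define k where "k = m div int d"
      have bH: "b \<in> H" using d b_def by simp
      have broot: "b [^]\<^bsub>Hs\<^esub> k = g" using powHs[OF bH] d(5) b_def k_def by simp
      have mk: "m = int d * k" using d(3) k_def by simp
      have rm: "real n * \<bar>r\<bar> < real_of_int m" using sr s by simp
      have "\<bar>r\<bar> < real_of_int k"
      proof (rule ccontr)
        assume "\<not> \<bar>r\<bar> < real_of_int k"
        hence kr: "real_of_int k \<le> \<bar>r\<bar>" by simp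
        have "real_of_int m = real d * real_of_int k" using mk by simp
        also have "\<dots> \<le> real d * \<bar>r\<bar>" using kr by (simp add: mult_left_mono)
        also have "\<dots> \<le> real n * \<bar>r\<bar>" using d(2) by (simp add: mult_right_mono)
        finally show False using rm by simp
      qed
      hence "k \<noteq> 0" "ereal r < ereal (real_of_int k)" by auto
      then show "\<exists>s\<in>{ereal (real_of_int n) | n::int. n \<noteq> 0 \<and> (\<exists>a \<in> carrier Hs. g = a [^]\<^bsub>Hs\<^esub> n)}. ereal r < s"
        using bH cHs broot by blast
    qed
    then show ?thesis using gL False unfolding nu_def Hs_def L_def by simp
  qed
qed

end
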